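(* Let $k\ge2$ and let $G$ be a $k$-uniform hypergraph with $n$ vertices, maximum degree $\Delta$, and no isolated vertices. Then $w(G)\le 10k^2n\Delta$.
   Context: $K_N^{(k)}$ denotes the complete $k$-uniform hypergraph on vertex set $[N]$. For a $k$-uniform hypergraph $G$ without isolated vertices, $w(G)$ is the minimum $N$ such that for every map $f:E(K_N^{(k)})\to E(K_N^{(k)})$ satisfying $f(e)\cap e=\emptyset$ for every edge $e$, there is a copy $G^*$ of $G$ in $K_N^{(k)}$ such that $f(e)\cap V(G^* )=\emptyset$ for every $e\in E(G^* )$. The degree of a vertex is the number of edges containing it. *)

theory Defs
  imports Main
begin

(* A k-uniform hypergraph without isolated vertices is represented by its finite
   edge set G :: 'a set set, every edge being a k-element set; its vertex set is
   the union of its edges (no isolated vertices). *)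

definition uniform_hypergraph :: "nat \<Rightarrow> 'a set set \<Rightarrow> bool" where
  "uniform_hypergraph k G \<longleftrightarrow> finite G \<and> (\<forall>e\<in>G. card e = k)"

definition hvertices :: "'a set set \<Rightarrow> 'a set" where
  "hvertices G = \<Union>G"

definition hdegree :: "'a set set \<Rightarrow> 'a \<Rightarrow> nat" where
  "hdegree G v = card {e\<in>G. v \<in> e}"

definition max_degree :: "'a set set \<Rightarrow> nat" where
  "max_degree G = Max (insert 0 (hdegree G ` hvertices G))"

definition complete_edges :: "nat \<Rightarrow> nat \<Rightarrow> nat set set" where
  "complete_edges N k = {e. e \<subseteq> {..<N} \<and> card e = k}"

definition admissible_map :: "nat \<Rightarrow> nat \<Rightarrow> (nat set \<Rightarrow> nat set) \<Rightarrow> bool" where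
  "admissible_map N k f \<longleftrightarrow>
     (\<forall>e\<in>complete_edges N k. f e \<in> complete_edges N k \<and> f e \<inter> e = {})"

(* The property defining w(G) at a given N: for every admissible f there is a copy
   G-star of G in K_N^(k) (the image of G under an injection \<phi> of V(G) into [N]) such
   that f(e) \<inter> V(G-star) = {} for every edge e of G-star. *)
definition w_property :: "nat \<Rightarrow> nat \<Rightarrow> 'a set set \<Rightarrow> bool" where
  "w_property N k G \<longleftrightarrow>
     (\<forall>f. admissible_map N k f \<longrightarrow>
        (\<exists>\<phi> :: 'a \<Rightarrow> nat. inj_on \<phi> (hvertices G) \<and> \<phi> ` hvertices G \<subseteq> {..<N} \<and>
           (\<forall>e\<in>G. f (\<phi> ` e) \<inter> \<phi> ` hvertices G = {})))"

definition w_number :: "nat \<Rightarrow> 'a set set \<Rightarrow> nat" where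
  "w_number k G = (LEAST N. \<forall>M\<ge>N. w_property M k G)"

end

theory Submission
  imports Defs Complex_Main "HOL-Library.FuncSet"
begin


lemma lll_step:
  fixes A :: "'i \<Rightarrow> 'w set" and p :: "'i \<Rightarrow> real" and N :: "'i \<Rightarrow> 'i set"
  assumes finO: "finite \<Omega>" and finI: "finite I"
  and Nsub: "\<And>i. i \<in> I \<Longrightarrow> N i \<subseteq> I"
  and p: "\<And>i. i \<in> I \<Longrightarrow> 0 \<le> p i"
  and psum: "\<And>i. i \<in> I \<Longrightarrow> sum p (N i) \<le> 1/4"
  and indep: "\<And>i S. i \<in> I \<Longrightarrow> S \<subseteq> I - N i - {i} \<Longrightarrow>
      real (card (A i \<inter> (\<Omega> - \<Union>(A`S)))) \<le> p i * card (\<Omega> - \<Union>(A`S))"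
  shows "S \<subseteq> I \<Longrightarrow> i \<in> I - S \<Longrightarrow>
      real (card (A i \<inter> (\<Omega> - \<Union>(A`S)))) \<le> 2 * p i * card (\<Omega> - \<Union>(A`S))"
proof (induction "card S" arbitrary: S i rule: less_induct)
  case less
  define S1 where "S1 = S \<inter> N i"
  define S2 where "S2 = S - N i"
  have iI: "i \<in> I" "i \<notin> S" using less.prems by auto
  have finS: "finite S" using less.prems finI finite_subset by blast
  have S2sub: "S2 \<subseteq> I - N i - {i}" using less.prems S2_def by auto
  have YS: "\<Omega> - \<Union>(A`S) = (\<Omega> - \<Union>(A`S2)) - \<Union>(A`S1)"
    unfolding S1_def S2_def by blast
  have sub1: "A i \<inter> (\<Omega> - \<Union>(A`S)) \<subseteq> A i \<inter> (\<Omega> - \<Union>(A`S2))" using YS by blast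
  have c1: "real (card (A i \<inter> (\<Omega> - \<Union>(A`S)))) \<le> real (card (A i \<inter> (\<Omega> - \<Union>(A`S2))))"
    using card_mono[OF _ sub1] finO by auto
  have c2: "real (card (A i \<inter> (\<Omega> - \<Union>(A`S2)))) \<le> p i * card (\<Omega> - \<Union>(A`S2))"
    using indep[OF iI(1) S2sub] .
  have c3: "real (card (\<Omega> - \<Union>(A`S2))) \<le> 2 * card (\<Omega> - \<Union>(A`S))"
  proof (cases "S1 = {}")
    case True
    then have "S2 = S" unfolding S1_def S2_def by auto
    then show ?thesis by simp
  next
    case False
    have finS1: "finite S1" using finS S1_def by auto
    have lt: "card S2 < card S"
    proof -
      obtain j where "j \<in> S1" using False by auto
      then have "S2 \<subset> S" unfolding S1_def S2_def by auto
      then show ?thesis using finS psubset_card_mono by blast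
    qed
    have IH: "real (card (A j \<inter> (\<Omega> - \<Union>(A`S2)))) \<le> 2 * p j * card (\<Omega> - \<Union>(A`S2))"
      if "j \<in> S1" for j
      using less.hyps[OF lt, of j] that less.prems unfolding S1_def S2_def by auto
    let ?Y2 = "\<Omega> - \<Union>(A`S2)"
    have "?Y2 \<subseteq> (\<Omega> - \<Union>(A`S)) \<union> (\<Union>j\<in>S1. A j \<inter> ?Y2)" using YS by blast
    then have "card ?Y2 \<le> card ((\<Omega> - \<Union>(A`S)) \<union> (\<Union>j\<in>S1. A j \<inter> ?Y2))"
      by (intro card_mono) (use finO in auto)
    also have "\<dots> \<le> card (\<Omega> - \<Union>(A`S)) + card (\<Union>j\<in>S1. A j \<inter> ?Y2)"
      by (rule card_Un_le)
    also have "\<dots> \<le> card (\<Omega> - \<Union>(A`S)) + (\<Sum>j\<in>S1. card (A j \<inter> ?Y2))"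
      using card_UN_le[OF finS1, of "\<lambda>j. A j \<inter> ?Y2"] by simp
    finally have "real (card ?Y2) \<le> real (card (\<Omega> - \<Union>(A`S)) + (\<Sum>j\<in>S1. card (A j \<inter> ?Y2)))"
      by (simp only: of_nat_le_iff)
    then have "real (card ?Y2) \<le> real (card (\<Omega> - \<Union>(A`S))) + (\<Sum>j\<in>S1. real (card (A j \<inter> ?Y2)))"
      by (simp add: of_nat_sum)
    also have "(\<Sum>j\<in>S1. real (card (A j \<inter> ?Y2))) \<le> (\<Sum>j\<in>S1. 2 * p j * card ?Y2)"
      by (rule sum_mono) (rule IH)
    also have "\<dots> = 2 * (\<Sum>j\<in>S1. p j) * card ?Y2"
      by (simp add: sum_distrib_right sum_distrib_left mult.assoc)
    also have "(\<Sum>j\<in>S1. p j) \<le> sum p (N i)"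
      using Nsub[OF iI(1)] p finI S1_def
      by (intro sum_mono2) (auto intro: finite_subset)
    then have "2 * (\<Sum>j\<in>S1. p j) * card ?Y2 \<le> 2 * (1/4) * card ?Y2"
      using psum[OF iI(1)] by (intro mult_right_mono) auto
    finally show ?thesis by simp
  qed
  have "real (card (A i \<inter> (\<Omega> - \<Union>(A`S)))) \<le> p i * card (\<Omega> - \<Union>(A`S2))"
    using c1 c2 by linarith
  also have "\<dots> \<le> p i * (2 * card (\<Omega> - \<Union>(A`S)))"
    using c3 p[OF iI(1)] by (intro mult_left_mono) auto
  finally show ?case by simp
qed

lemma lll:
  fixes A :: "'i \<Rightarrow> 'w set" and p :: "'i \<Rightarrow> real" and N :: "'i \<Rightarrow> 'i set"
  assumes finO: "finite \<Omega>" and finI: "finite I" and ne: "\<Omega> \<noteq> {}"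
  and Nsub: "\<And>i. i \<in> I \<Longrightarrow> N i \<subseteq> I"
  and p: "\<And>i. i \<in> I \<Longrightarrow> 0 \<le> p i \<and> p i \<le> 1/4"
  and psum: "\<And>i. i \<in> I \<Longrightarrow> sum p (N i) \<le> 1/4"
  and indep: "\<And>i S. i \<in> I \<Longrightarrow> S \<subseteq> I - N i - {i} \<Longrightarrow>
      real (card (A i \<inter> (\<Omega> - \<Union>(A`S)))) \<le> p i * card (\<Omega> - \<Union>(A`S))"
  shows "\<Omega> - \<Union>(A`I) \<noteq> {}"
proof -
  have step: "S \<subseteq> I \<Longrightarrow> i \<in> I - S \<Longrightarrow>
      real (card (A i \<inter> (\<Omega> - \<Union>(A`S)))) \<le> 2 * p i * card (\<Omega> - \<Union>(A`S))" for S i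
    by (rule lll_step[of \<Omega> I N p A]) (use finO finI Nsub p psum indep in auto)
  have "finite F \<Longrightarrow> F \<subseteq> I \<Longrightarrow> real (card (\<Omega> - \<Union>(A`F))) \<ge> (1/2)^card F * card \<Omega>" for F
  proof (induction F rule: finite_induct)
    case empty then show ?case by simp
  next
    case (insert i F)
    note 3 = insert
    let ?Y = "\<Omega> - \<Union>(A`F)"
    have eq: "\<Omega> - \<Union>(A`insert i F) = ?Y - (A i \<inter> ?Y)" by blast
    have "card (\<Omega> - \<Union>(A`insert i F)) = card ?Y - card (A i \<inter> ?Y)"
      unfolding eq by (rule card_Diff_subset) (use finO in auto)
    moreover have "card (A i \<inter> ?Y) \<le> card ?Y" by (rule card_mono) (use finO in auto)
    ultimately have e: "real (card (\<Omega> - \<Union>(A`insert i F))) = real (card ?Y) - real (card (A i \<inter> ?Y))"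
      by (simp add: of_nat_diff)
    have b: "real (card (A i \<inter> ?Y)) \<le> 2 * p i * card ?Y" using step[of F i] 3 by auto
    have "p i \<le> 1/4" using p 3 by auto
    then have "real (card (\<Omega> - \<Union>(A`insert i F))) \<ge> (1/2) * card ?Y"
    proof -
      have "2 * p i * card ?Y \<le> 2 * (1/4) * card ?Y"
        using `p i \<le> 1/4` by (intro mult_right_mono) auto
      then show ?thesis using e b by linarith
    qed
    moreover have "(1/2) * card ?Y \<ge> (1/2) * ((1/2)^card F * card \<Omega>)"
      using 3 by auto
    moreover have "(1/2::real)^card (insert i F) = (1/2) * (1/2)^card F"
      using 3 by simp
    ultimately show ?case by (simp only: mult.assoc)
  qed
  moreover have "(1/2::real)^card I * real (card \<Omega>) > 0"
    using ne finO by (simp add: card_gt_0_iff)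
  ultimately have "real (card (\<Omega> - \<Union>(A`I))) > 0"
    using finI by (meson order_refl less_le_trans)
  then have "card (\<Omega> - \<Union>(A`I)) \<noteq> 0" by linarith
  then show ?thesis by (metis card.empty)
qed



lemma card_fibers:
  assumes "finite X"
  shows "card X = (\<Sum>z\<in>g`X. card {x\<in>X. g x = z})"
proof -
  have "X = (\<Union>z\<in>g`X. {x\<in>X. g x = z})" by auto
  then have "card X = card (\<Union>z\<in>g`X. {x\<in>X. g x = z})" by simp
  also have "\<dots> = (\<Sum>z\<in>g`X. card {x\<in>X. g x = z})"
    by (rule card_UN_disjoint) (use assms in auto)
  finally show ?thesis .
qed

lemma fiber_count:
  fixes Y B :: "('v \<Rightarrow> nat) set"
  assumes finV: "finite V" and cV: "c \<in> V"
  and Ysub: "Y \<subseteq> PiE V (\<lambda>_. {..<M})"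
  and closed: "\<And>\<phi> y. \<phi> \<in> Y \<Longrightarrow> y < M \<Longrightarrow> \<phi>(c:=y) \<in> Y"
  and bound: "\<And>\<phi>. \<phi> \<in> Y \<Longrightarrow> card {y\<in>{..<M}. \<phi>(c:=y) \<in> B} \<le> q"
  shows "M * card (B \<inter> Y) \<le> q * card Y"
proof -
  define g where "g = (\<lambda>\<phi>::'v\<Rightarrow>nat. \<phi>(c := undefined))"
  have finY: "finite Y" using finite_subset[OF Ysub] finite_PiE[OF finV, of "\<lambda>_. {..<M}"] by auto
  have fib: "{x\<in>Y. g x = g \<phi>} = (\<lambda>y. \<phi>(c:=y)) ` {..<M}" if "\<phi> \<in> Y" for \<phi>
  proof
    show "{x\<in>Y. g x = g \<phi>} \<subseteq> (\<lambda>y. \<phi>(c:=y)) ` {..<M}"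
    proof
      fix x assume x: "x \<in> {x\<in>Y. g x = g \<phi>}"
      then have "x c < M" using Ysub cV by (auto simp: PiE_iff)
      moreover have "x = \<phi>(c := x c)"
        using x unfolding g_def by (metis (mono_tags) fun_upd_triv fun_upd_upd mem_Collect_eq)
      ultimately show "x \<in> (\<lambda>y. \<phi>(c:=y)) ` {..<M}" by auto
    qed
    show "(\<lambda>y. \<phi>(c:=y)) ` {..<M} \<subseteq> {x\<in>Y. g x = g \<phi>}"
      using closed[OF that] unfolding g_def by auto
  qed
  have injf: "inj_on (\<lambda>y. \<phi>(c:=y)) A" for \<phi> :: "'v \<Rightarrow> nat" and A
    by (rule inj_onI) (metis fun_upd_same)
  have c1: "card {x\<in>Y. g x = z} = M" if zY: "z \<in> g`Y" for z
  proof -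
    obtain \<phi> where "\<phi> \<in> Y" "z = g \<phi>" using zY by blast
    then show ?thesis using fib card_image[OF injf] by simp
  qed
  have c2: "card {x\<in>B \<inter> Y. g x = z} \<le> q" if zY: "z \<in> g`Y" for z
  proof -
    obtain \<phi> where ph: "\<phi> \<in> Y" "z = g \<phi>" using zY by blast
    have "{x\<in>B \<inter> Y. g x = z} = (\<lambda>y. \<phi>(c:=y)) ` {y\<in>{..<M}. \<phi>(c:=y) \<in> B}"
      using fib[OF ph(1)] ph(2) by auto
    then have "card {x\<in>B \<inter> Y. g x = z} = card {y\<in>{..<M}. \<phi>(c:=y) \<in> B}"
      using card_image[OF injf] by simp
    then show ?thesis using bound[OF ph(1)] by simp
  qed
  have "card Y = (\<Sum>z\<in>g`Y. card {x\<in>Y. g x = z})" by (rule card_fibers[OF finY])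
  also have "\<dots> = M * card (g`Y)" using c1 by simp
  finally have eY: "card Y = M * card (g`Y)" .
  have "card (B \<inter> Y) = (\<Sum>z\<in>g`(B \<inter> Y). card {x\<in>B \<inter> Y. g x = z})"
    by (rule card_fibers) (use finY in auto)
  also have "\<dots> \<le> (\<Sum>z\<in>g`Y. card {x\<in>B \<inter> Y. g x = z})"
    by (rule sum_mono2) (use finY in auto)
  also have "\<dots> \<le> (\<Sum>z\<in>g`Y. q)" by (rule sum_mono) (rule c2)
  finally have "card (B \<inter> Y) \<le> q * card (g`Y)" by (simp add: mult.commute)
  then have "M * card (B \<inter> Y) \<le> M * (q * card (g`Y))" by simp
  then show ?thesis using eY by (simp add: algebra_simps)
qed



lemma main_exists:
  fixes G :: "'a set set" and k M :: nat and f :: "nat set \<Rightarrow> nat set"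
  assumes k2: "k \<ge> 2" and U: "uniform_hypergraph k G" and Gne: "G \<noteq> {}"
  and MB: "10 * k^2 * card (hvertices G) * max_degree G \<le> M"
  and adm: "admissible_map M k f"
  shows "\<exists>\<phi>::'a \<Rightarrow> nat. inj_on \<phi> (hvertices G) \<and> \<phi> ` hvertices G \<subseteq> {..<M} \<and>
           (\<forall>e\<in>G. f (\<phi> ` e) \<inter> \<phi> ` hvertices G = {})"
proof -
  define V where "V = hvertices G"
  define n where "n = card V"
  define D where "D = max_degree G"
  have finG: "finite G" and cardE: "\<And>e. e \<in> G \<Longrightarrow> card e = k"
    using U unfolding uniform_hypergraph_def by auto
  have finE: "\<And>e. e \<in> G \<Longrightarrow> finite e"
    using cardE k2 by (metis card.infinite not_numeral_le_zero)
  have eV: "\<And>e. e \<in> G \<Longrightarrow> e \<subseteq> V" unfolding V_def hvertices_def by auto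
  have finV: "finite V" unfolding V_def hvertices_def using finG finE by auto
  have dD: "card {e\<in>G. v\<in>e} \<le> D" for v
  proof (cases "v \<in> V")
    case True
    then have "hdegree G v \<in> insert 0 (hdegree G ` hvertices G)" unfolding V_def by auto
    then have "hdegree G v \<le> D" unfolding D_def max_degree_def
      using finV V_def by (intro Max_ge) auto
    then show ?thesis unfolding hdegree_def .
  next
    case False
    then have "{e\<in>G. v\<in>e} = {}" using eV by auto
    then show ?thesis by (metis card.empty le0)
  qed
  obtain e0 where e0: "e0 \<in> G" using Gne by auto
  then have "e0 \<noteq> {}" using cardE k2 by fastforce
  then obtain v0 where v0: "v0 \<in> e0" by auto
  have D1: "D \<ge> 1"
  proof -
    have "e0 \<in> {e\<in>G. v0\<in>e}" using e0 v0 by auto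
    then have "card {e\<in>G. v0\<in>e} \<ge> 1" using finG
      by (metis (no_types, lifting) One_nat_def Suc_leI card_gt_0_iff empty_iff finite_subset mem_Collect_eq subsetI)
    then show ?thesis using dD[of v0] by linarith
  qed
  have n1: "n \<ge> 1" using v0 e0 eV finV unfolding n_def
    by (metis One_nat_def Suc_leI card_gt_0_iff empty_iff subsetD)
  have cardG: "card G \<le> n * D"
  proof -
    have "G \<subseteq> (\<Union>v\<in>V. {e\<in>G. v\<in>e})"
    proof
      fix e assume e: "e \<in> G"
      then have "e \<noteq> {}" using cardE k2 by fastforce
      then obtain v where "v \<in> e" by auto
      then show "e \<in> (\<Union>v\<in>V. {e\<in>G. v\<in>e})" using e eV by auto
    qed
    then have "card G \<le> card (\<Union>v\<in>V. {e\<in>G. v\<in>e})"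
      by (intro card_mono) (use finG finV in auto)
    also have "\<dots> \<le> (\<Sum>v\<in>V. card {e\<in>G. v\<in>e})" by (rule card_UN_le[OF finV])
    also have "\<dots> \<le> (\<Sum>v\<in>V. D)" by (rule sum_mono) (rule dD)
    finally show ?thesis unfolding n_def by simp
  qed
  have MB': "10 * k^2 * n * D \<le> M" using MB unfolding n_def V_def D_def .
  have k2n: "k * 1 * 1 \<le> k^2 * n * D" using n1 D1 k2
    by (intro mult_mono) (auto simp: power2_eq_square)
  have M4: "4 * k \<le> M" using MB' k2n by linarith
  have M12: "12 * (k * n * D) \<le> M"
  proof -
    have a: "12 * (k * n * D) \<le> (10 * k) * (k * n * D)" using k2 by (intro mult_right_mono) auto
    have b: "(10 * k) * (k * n * D) = 10 * k^2 * n * D" by (simp add: power2_eq_square algebra_simps)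
    show ?thesis using MB' a b by linarith
  qed
  have Mpos: "M > 0" using M4 k2 by linarith

  define \<Omega> where "\<Omega> = PiE V (\<lambda>_. {..<M})"
  define P2 where "P2 = {s. s \<subseteq> V \<and> card s = 2}"
  define Bs where "Bs = {(e,u). e \<in> G \<and> u \<in> V \<and> u \<notin> e}"
  define I :: "('a set + ('a set \<times> 'a)) set" where "I = Inl ` P2 \<union> Inr ` Bs"
  define A :: "('a set + ('a set \<times> 'a)) \<Rightarrow> ('a \<Rightarrow> nat) set" where
    "A = case_sum (\<lambda>s. {\<phi>\<in>\<Omega>. \<not> inj_on \<phi> s}) (\<lambda>(e,u). {\<phi>\<in>\<Omega>. inj_on \<phi> e \<and> \<phi> u \<in> f (\<phi> ` e)})"
  define T :: "('a set + ('a set \<times> 'a)) \<Rightarrow> 'a set" where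
    "T = case_sum (\<lambda>s. s) (\<lambda>(e,u). insert u e)"
  define c :: "('a set + ('a set \<times> 'a)) \<Rightarrow> 'a" where
    "c = case_sum (\<lambda>s. SOME x. x \<in> s) (\<lambda>(e,u). u)"
  define N where "N i = {j\<in>I. j \<noteq> i \<and> c i \<in> T j}" for i
  define p :: "('a set + ('a set \<times> 'a)) \<Rightarrow> real" where
    "p = case_sum (\<lambda>_. 1 / M) (\<lambda>_. k / M)"
  define q :: "('a set + ('a set \<times> 'a)) \<Rightarrow> nat" where
    "q = case_sum (\<lambda>_. 1) (\<lambda>_. k)"
  have A_Inl: "A (Inl s) = {\<phi>\<in>\<Omega>. \<not> inj_on \<phi> s}" for s by (simp add: A_def)
  have A_Inr: "A (Inr (e,u)) = {\<phi>\<in>\<Omega>. inj_on \<phi> e \<and> \<phi> u \<in> f (\<phi> ` e)}" for e u by (simp add: A_def)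
  have T_Inl: "T (Inl s) = s" for s by (simp add: T_def)
  have T_Inr: "T (Inr (e,u)) = insert u e" for e u by (simp add: T_def)
  have c_Inl: "c (Inl s) = (SOME x. x \<in> s)" for s by (simp add: c_def)
  have c_Inr: "c (Inr (e,u)) = u" for e u by (simp add: c_def)
  have p_Inl: "p (Inl s) = 1 / M" for s by (simp add: p_def)
  have p_Inr: "p (Inr eu) = k / M" for eu by (simp add: p_def)
  have q_Inl: "q (Inl s) = 1" for s by (simp add: q_def)
  have q_Inr: "q (Inr eu) = k" for eu by (simp add: q_def)
  have pq: "p i = real (q i) / M" for i by (cases i) (simp_all add: p_def q_def)

  have finO: "finite \<Omega>" unfolding \<Omega>_def by (rule finite_PiE[OF finV]) auto
  have finP2: "finite P2" unfolding P2_def by (rule finite_subset[of _ "Pow V"]) (use finV in auto)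
  have finBs: "finite Bs" unfolding Bs_def
    by (rule finite_subset[of _ "G \<times> V"]) (use finV finG in auto)
  have finI: "finite I" unfolding I_def using finP2 finBs by auto
  have neO: "\<Omega> \<noteq> {}"
  proof -
    have "(\<lambda>v. if v \<in> V then 0 else undefined) \<in> \<Omega>"
      unfolding \<Omega>_def using Mpos by (auto simp: PiE_iff extensional_def)
    then show ?thesis by auto
  qed
  have kM: "real k / M \<le> 1/4" using M4 Mpos by (simp add: divide_simps)
  have pb: "0 \<le> p i \<and> p i \<le> 1/4" for i
  proof (cases i)
    case (Inl s)
    have "real 1 / M \<le> real k / M" using k2 Mpos by (intro divide_right_mono) auto
    moreover have "p i = real 1 / M" using Inl by (simp add: p_def)
    moreover have "0 \<le> real 1 / M" by simp
    ultimately show ?thesis using kM by linarith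
  next
    case (Inr eu)
    then show ?thesis using kM by (simp add: p_def)
  qed
  have pk: "p i \<le> real k / M" for i
  proof (cases i)
    case (Inl s)
    have "real 1 / M \<le> real k / M" using k2 Mpos by (intro divide_right_mono) auto
    then show ?thesis using Inl by (simp add: p_def)
  qed (simp add: p_def)

  have cV: "c i \<in> V" if iI0: "i \<in> I" for i
  proof -
    consider (L) s where "i = Inl s" "s \<in> P2" | (R) e u where "i = Inr (e,u)" "(e,u) \<in> Bs"
      using iI0 unfolding I_def by auto
    then show ?thesis
    proof cases
      case L
      then have "s \<noteq> {}" "s \<subseteq> V" unfolding P2_def by auto
      then show ?thesis using L by (simp add: c_Inl) (metis some_in_eq subsetD)
    next
      case R then show ?thesis by (simp add: c_Inr Bs_def)
    qed
  qed

  have cardN: "card (N i) \<le> 3 * n * D" if iI: "i \<in> I" for i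
  proof -
    define x where "x = c i"
    define X1 where "X1 = {s\<in>P2. x \<in> s}"
    define X2 where "X2 = {e\<in>G. x\<in>e} \<times> V"
    define X3 where "X3 = (\<lambda>e. (e,x)) ` G"
    have sub: "N i \<subseteq> Inl ` X1 \<union> Inr ` X2 \<union> Inr ` X3"
    proof
      fix j assume j: "j \<in> N i"
      then have jI: "j \<in> I" and xT: "x \<in> T j" unfolding N_def x_def by auto
      consider (L) s where "j = Inl s" "s \<in> P2" | (R) e u where "j = Inr (e,u)" "(e,u) \<in> Bs"
        using jI unfolding I_def by auto
      then show "j \<in> Inl ` X1 \<union> Inr ` X2 \<union> Inr ` X3"
      proof cases
        case L then show ?thesis using xT by (auto simp: X1_def T_Inl)
      next
        case R
        then have "x = u \<or> x \<in> e" using xT by (simp add: T_Inr)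
        then show ?thesis using R by (auto simp: X2_def X3_def Bs_def)
      qed
    qed
    have c1: "card X1 \<le> n"
    proof -
      have "X1 \<subseteq> (\<lambda>a. {x,a}) ` V"
      proof
        fix s assume s: "s \<in> X1"
        then have sV: "s \<subseteq> V" "card s = 2" "x \<in> s" unfolding X1_def P2_def by auto
        then obtain a b where ab: "s = {a,b}" "a \<noteq> b" by (auto simp: card_2_iff)
        then show "s \<in> (\<lambda>a. {x,a}) ` V" using sV by auto
      qed
      then have "card X1 \<le> card ((\<lambda>a. {x,a}) ` V)" by (intro card_mono) (use finV in auto)
      also have "\<dots> \<le> card V" by (rule card_image_le[OF finV])
      finally show ?thesis unfolding n_def .
    qed
    have c2: "card X2 \<le> D * n" unfolding X2_def n_def
      using dD[of x] by (simp add: card_cartesian_product)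
    have c3: "card X3 \<le> n * D" unfolding X3_def using card_image_le[OF finG] cardG by (meson le_trans)
    have "card (N i) \<le> card (Inl ` X1 \<union> Inr ` X2 \<union> Inr ` X3)"
      by (intro card_mono[OF _ sub]) (auto simp: X1_def X2_def X3_def finP2 finG finV)
    also have "\<dots> \<le> card (Inl ` X1 \<union> Inr ` X2) + card (Inr ` X3 :: ('a set + ('a set \<times> 'a)) set)"
      by (rule card_Un_le)
    also have "\<dots> \<le> card (Inl ` X1 :: ('a set + ('a set \<times> 'a)) set) + card (Inr ` X2 :: ('a set + ('a set \<times> 'a)) set) + card (Inr ` X3 :: ('a set + ('a set \<times> 'a)) set)"
      using card_Un_le by simp
    also have "\<dots> \<le> card X1 + card X2 + card X3"
      by (simp add: card_image)
    also have "\<dots> \<le> n + D * n + n * D" using c1 c2 c3 by linarith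
    also have "\<dots> \<le> 3 * n * D" using D1 by (simp add: algebra_simps)
    finally show ?thesis .
  qed

  have psum: "sum p (N i) \<le> 1/4" if iI: "i \<in> I" for i
  proof -
    have "sum p (N i) \<le> (\<Sum>j\<in>N i. real k / M)" by (rule sum_mono) (rule pk)
    also have "\<dots> = card (N i) * (real k / M)" by simp
    also have "\<dots> \<le> (3 * n * D) * (real k / M)"
      using cardN[OF iI] by (intro mult_right_mono) (auto simp del: of_nat_mult)
    also have "\<dots> = real (12 * (k * n * D)) / (4 * M)" by simp
    also have "\<dots> \<le> real M / (4 * M)"
    proof (rule divide_right_mono)
      show "real (12 * (k * n * D)) \<le> real M" using M12 by (simp only: of_nat_le_iff)
    qed simp
    also have "\<dots> = 1/4" using Mpos by simp
    finally show ?thesis .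
  qed

  have Nsub: "N i \<subseteq> I" for i unfolding N_def by auto

  have local: "(\<phi>(x:=y) \<in> A j) \<longleftrightarrow> (\<phi> \<in> A j)"
    if "x \<notin> T j" "\<phi> \<in> \<Omega>" "\<phi>(x:=y) \<in> \<Omega>" for j \<phi> x y
  proof (cases j)
    case (Inl s)
    then have xs: "x \<notin> s" using that by (simp add: T_Inl)
    have "inj_on (\<phi>(x:=y)) s \<longleftrightarrow> inj_on \<phi> s" by (rule inj_on_cong) (use xs in auto)
    then show ?thesis using Inl that by (simp add: A_Inl)
  next
    case (Inr eu)
    obtain e u where eu: "eu = (e,u)" by (cases eu)
    then have xs: "x \<notin> e" "x \<noteq> u" using that Inr by (auto simp: T_Inr)
    have "inj_on (\<phi>(x:=y)) e \<longleftrightarrow> inj_on \<phi> e" by (rule inj_on_cong) (use xs in auto)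
    moreover have "(\<phi>(x:=y)) ` e = \<phi> ` e" using xs by auto
    ultimately show ?thesis using Inr eu that xs by (simp add: A_Inr)
  qed

  have indep: "real (card (A i \<inter> (\<Omega> - \<Union>(A`S)))) \<le> p i * card (\<Omega> - \<Union>(A`S))"
    if iI: "i \<in> I" and S: "S \<subseteq> I - N i - {i}" for i S
  proof -
    define Y where "Y = \<Omega> - \<Union>(A`S)"
    have ciV: "c i \<in> V" using cV[OF iI] .
    have upd\<Omega>: "\<phi>(c i:=y) \<in> \<Omega>" if "\<phi> \<in> \<Omega>" "y < M" for \<phi> y
      using that ciV unfolding \<Omega>_def by (auto simp: PiE_iff extensional_def)
    have notT: "c i \<notin> T j" if "j \<in> S" for j
      using that S unfolding N_def by auto
    have closed: "\<phi>(c i:=y) \<in> Y" if "\<phi> \<in> Y" "y < M" for \<phi> y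
    proof -
      have ph: "\<phi> \<in> \<Omega>" using that Y_def by auto
      have "\<phi>(c i:=y) \<notin> A j" if "j \<in> S" for j
        using local[OF notT[OF that] ph upd\<Omega>[OF ph \<open>y < M\<close>]] \<open>\<phi> \<in> Y\<close> that Y_def by auto
      then show ?thesis using upd\<Omega>[OF ph that(2)] Y_def by auto
    qed
    have bound: "card {y\<in>{..<M}. \<phi>(c i:=y) \<in> A i} \<le> q i" if "\<phi> \<in> Y" for \<phi>
    proof -
      have ph: "\<phi> \<in> \<Omega>" using that Y_def by auto
      consider (L) s where "i = Inl s" "s \<in> P2" | (R) e u where "i = Inr (e,u)" "(e,u) \<in> Bs"
        using iI unfolding I_def by auto
      then show ?thesis
      proof cases
        case L
        then have s2: "card s = 2" unfolding P2_def by auto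
        then obtain a b where ab: "s = {a,b}" "a \<noteq> b" by (auto simp: card_2_iff)
        have ex: "\<exists>x. x \<in> s" using ab by auto
        have "(SOME x. x \<in> s) \<in> s" using someI_ex[OF ex] .
        then have cs: "c i \<in> s" using L by (simp add: c_Inl)
        obtain w where w: "s = {c i, w}" "w \<noteq> c i" using cs ab by blast
        have "{y\<in>{..<M}. \<phi>(c i:=y) \<in> A i} \<subseteq> {\<phi> w}"
        proof
          fix y assume y: "y \<in> {y\<in>{..<M}. \<phi>(c i:=y) \<in> A i}"
          have Ai: "A i = {\<phi>\<in>\<Omega>. \<not> inj_on \<phi> s}" using L by (simp add: A_Inl)
          have "\<not> inj_on (\<phi>(c i:=y)) {c i, w}" using y Ai w(1) by auto
          moreover have "y \<noteq> \<phi> w \<Longrightarrow> inj_on (\<phi>(c i:=y)) {c i, w}"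
            using w(2) by (auto simp: inj_on_def)
          ultimately show "y \<in> {\<phi> w}" by auto
        qed
        then have "card {y\<in>{..<M}. \<phi>(c i:=y) \<in> A i} \<le> card {\<phi> w}"
          by (intro card_mono) auto
        then show ?thesis using L by (simp add: q_Inl)
      next
        case R
        then have ue: "u \<notin> e" "e \<in> G" "u \<in> V" unfolding Bs_def by auto
        have ci: "c i = u" using R by (simp add: c_Inr)
        have img: "(\<phi>(u:=y)) ` e = \<phi> ` e" for y using ue by auto
        have injeq: "inj_on (\<phi>(u:=y)) e \<longleftrightarrow> inj_on \<phi> e" for y
          by (rule inj_on_cong) (use ue in auto)
        show ?thesis
        proof (cases "inj_on \<phi> e")
          case True
          have "\<phi> ` e \<subseteq> {..<M}" using ph eV[OF ue(2)] unfolding \<Omega>_def by (auto simp: PiE_iff)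
          moreover have "card (\<phi> ` e) = k" using card_image[OF True] cardE[OF ue(2)] by simp
          ultimately have "\<phi> ` e \<in> complete_edges M k" unfolding complete_edges_def by auto
          then have fe: "f (\<phi> ` e) \<in> complete_edges M k" using adm unfolding admissible_map_def by auto
          then have fin: "finite (f (\<phi> ` e))" and ck: "card (f (\<phi> ` e)) = k"
            unfolding complete_edges_def by (auto intro: finite_subset)
          have "{y\<in>{..<M}. \<phi>(c i:=y) \<in> A i} \<subseteq> f (\<phi> ` e)"
            using R ci img by (auto simp: A_Inr)
          then have "card {y\<in>{..<M}. \<phi>(c i:=y) \<in> A i} \<le> card (f (\<phi> ` e))"
            by (rule card_mono[OF fin])
          then show ?thesis using ck R by (simp add: q_Inr)
        next
          case False
          have "{y\<in>{..<M}. \<phi>(c i:=y) \<in> A i} = {}"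
            using R ci injeq False by (auto simp: A_Inr)
          then show ?thesis by (metis card.empty le0)
        qed
      qed
    qed
    have Ysub: "Y \<subseteq> PiE V (\<lambda>_. {..<M})" unfolding Y_def \<Omega>_def by auto
    have "M * card (A i \<inter> Y) \<le> q i * card Y"
      by (rule fiber_count[OF finV ciV Ysub closed bound])
    then have "real M * card (A i \<inter> Y) \<le> real (q i) * card Y"
      by (metis of_nat_le_iff of_nat_mult)
    then have "real (card (A i \<inter> Y)) \<le> real (q i) / M * card Y"
      using Mpos by (simp add: divide_simps mult.commute)
    then show ?thesis unfolding Y_def pq .
  qed

  have "\<Omega> - \<Union>(A`I) \<noteq> {}"
    by (rule lll[OF finO finI neO Nsub pb psum indep])
  then obtain \<phi> where ph: "\<phi> \<in> \<Omega>" and nA: "\<And>j. j \<in> I \<Longrightarrow> \<phi> \<notin> A j" by blast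
  have inj: "inj_on \<phi> V"
  proof (rule inj_onI, rule ccontr)
    fix a b assume ab: "a \<in> V" "b \<in> V" "\<phi> a = \<phi> b" "a \<noteq> b"
    then have "{a,b} \<in> P2" unfolding P2_def by auto
    then have "Inl {a,b} \<in> I" unfolding I_def by auto
    moreover have "\<phi> \<in> A (Inl {a,b})" using ph ab by (simp add: A_Inl)
    ultimately show False using nA by blast
  qed
  have rng: "\<phi> ` V \<subseteq> {..<M}" using ph unfolding \<Omega>_def by (auto simp: PiE_iff)
  have disj: "f (\<phi> ` e) \<inter> \<phi> ` V = {}" if e: "e \<in> G" for e
  proof (rule ccontr)
    assume "f (\<phi> ` e) \<inter> \<phi> ` V \<noteq> {}"
    then obtain v where v: "v \<in> V" "\<phi> v \<in> f (\<phi> ` e)" by auto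
    have injE: "inj_on \<phi> e" using inj eV[OF e] by (rule inj_on_subset)
    show False
    proof (cases "v \<in> e")
      case True
      have "\<phi> ` e \<subseteq> {..<M}" using rng eV[OF e] by auto
      moreover have "card (\<phi> ` e) = k" using card_image[OF injE] cardE[OF e] by simp
      ultimately have "\<phi> ` e \<in> complete_edges M k" unfolding complete_edges_def by auto
      then have "f (\<phi> ` e) \<inter> \<phi> ` e = {}" using adm unfolding admissible_map_def by auto
      then show False using v True by auto
    next
      case False
      then have "Inr (e,v) \<in> I" unfolding I_def Bs_def using e v by auto
      moreover have "\<phi> \<in> A (Inr (e,v))" using ph injE v by (simp add: A_Inr)
      ultimately show False using nA by blast
    qed
  qed
  show ?thesis using inj rng disj unfolding V_def by blast
qed


theorem proposition3p4:
  fixes G :: "'a set set" and k :: nat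
  assumes "k \<ge> 2"
    and "uniform_hypergraph k G"
  shows "w_number k G \<le> 10 * k^2 * card (hvertices G) * max_degree G"
proof -
  have "\<forall>M\<ge>10 * k^2 * card (hvertices G) * max_degree G. w_property M k G"
  proof (intro allI impI)
    fix M assume M: "10 * k^2 * card (hvertices G) * max_degree G \<le> M"
    show "w_property M k G" unfolding w_property_def
    proof (intro allI impI)
      fix f assume adm: "admissible_map M k f"
      show "\<exists>\<phi> :: 'a \<Rightarrow> nat. inj_on \<phi> (hvertices G) \<and> \<phi> ` hvertices G \<subseteq> {..<M} \<and>
           (\<forall>e\<in>G. f (\<phi> ` e) \<inter> \<phi> ` hvertices G = {})"
      proof (cases "G = {}")
        case True
        then have "hvertices G = {}" unfolding hvertices_def by simp
        then show ?thesis using True by auto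
      next
        case False
        show ?thesis by (rule main_exists[OF assms(1) assms(2) False M adm])
      qed
    qed
  qed
  then show ?thesis unfolding w_number_def by (rule Least_le)
qed

end
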